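(* For every $n\ge 2$ and every pure state $|\psi\rangle$ on a set $V$ of $n$ qubits, the entanglement width satisfies $ew(|\psi\rangle)\le\lceil n/3\rceil$.
   Context: For a pure state $|\psi\rangle$ on a set $V$ of qubits and a bipartition $V=A\sqcup B$, with Schmidt decomposition $|\psi\rangle=\sum_i\alpha_i|\psi_i\rangle_A|\phi_i\rangle_B$ ($\alpha_i>0$), the bipartite entanglement entropy is $E_{A,B}(|\psi\rangle)=-\sum_i\alpha_i^2\log_2(\alpha_i^2)$. A subcubic tree is a tree with all vertex degrees at most 3. A branch decomposition of $V$ is a pair $(T,\mathcal{L})$ where $T$ is a subcubic tree and $\mathcal{L}$ a bijection from the leaves of $T$ to $V$; removing an edge $e$ of $T$ splits the leaves into two sets, hence via $\mathcal{L}$ induces a bipartition $A^e\sqcup B^e$ of $V$. The width of $(T,\mathcal{L})$ is $\max_{e\in E(T)}E_{A^e,B^e}(|\psi\rangle)$, and the entanglement width $ew(|\psi\rangle)$ is the minimum width over all branch decompositions of $V$. *)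

theory Defs
  imports Complex_Main
begin

(* Qubits are elements of a type 'a; a pure state on the finite qubit set V is
   given by its amplitudes in the computational basis.  A computational basis
   state of V is identified with the subset S \<subseteq> V of qubits in state |1>. *)

definition pure_state :: "'a set \<Rightarrow> ('a set \<Rightarrow> complex) \<Rightarrow> bool" where
  "pure_state V \<psi> \<longleftrightarrow> finite V \<and> (\<forall>S. \<not> S \<subseteq> V \<longrightarrow> \<psi> S = 0)
     \<and> (\<Sum>S\<in>Pow V. (cmod (\<psi> S))\<^sup>2) = 1"

definition orthonormal_family :: "'a set \<Rightarrow> (nat \<Rightarrow> 'a set \<Rightarrow> complex) \<Rightarrow> nat \<Rightarrow> bool" where
  "orthonormal_family A f k \<longleftrightarrow>
     (\<forall>i<k. \<forall>j<k. (\<Sum>S\<in>Pow A. cnj (f i S) * f j S) = (if i = j then 1 else 0))"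

definition schmidt_decomp ::
  "'a set \<Rightarrow> 'a set \<Rightarrow> ('a set \<Rightarrow> complex) \<Rightarrow> nat \<Rightarrow> (nat \<Rightarrow> real)
     \<Rightarrow> (nat \<Rightarrow> 'a set \<Rightarrow> complex) \<Rightarrow> (nat \<Rightarrow> 'a set \<Rightarrow> complex) \<Rightarrow> bool" where
  "schmidt_decomp V A \<psi> k \<alpha> f g \<longleftrightarrow>
     (\<forall>i<k. \<alpha> i > 0) \<and> orthonormal_family A f k \<and> orthonormal_family (V - A) g k \<and>
     (\<forall>S\<subseteq>V. \<psi> S = (\<Sum>i<k. complex_of_real (\<alpha> i) * f i (S \<inter> A) * g i (S - A)))"

definition ent_entropy :: "'a set \<Rightarrow> 'a set \<Rightarrow> ('a set \<Rightarrow> complex) \<Rightarrow> real" where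
  "ent_entropy V A \<psi> = (SOME h. \<exists>k \<alpha> f g. schmidt_decomp V A \<psi> k \<alpha> f g \<and>
       h = - (\<Sum>i<k. (\<alpha> i)\<^sup>2 * log 2 ((\<alpha> i)\<^sup>2)))"

definition adj_rel :: "nat set set \<Rightarrow> (nat \<times> nat) set" where
  "adj_rel E = {(x, y). {x, y} \<in> E}"

definition is_tree :: "nat set \<Rightarrow> nat set set \<Rightarrow> bool" where
  "is_tree N E \<longleftrightarrow> finite N \<and> N \<noteq> {} \<and>
     (\<forall>e\<in>E. \<exists>x y. e = {x, y} \<and> x \<noteq> y \<and> x \<in> N \<and> y \<in> N) \<and>
     (\<forall>x\<in>N. \<forall>y\<in>N. (x, y) \<in> (adj_rel E)\<^sup>*) \<and>
     (\<forall>e\<in>E. \<forall>x y. e = {x, y} \<longrightarrow> (x, y) \<notin> (adj_rel (E - {e}))\<^sup>*)"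

definition degree :: "nat set set \<Rightarrow> nat \<Rightarrow> nat" where
  "degree E v = card {e\<in>E. v \<in> e}"

definition subcubic_tree :: "nat set \<Rightarrow> nat set set \<Rightarrow> bool" where
  "subcubic_tree N E \<longleftrightarrow> is_tree N E \<and> (\<forall>v\<in>N. degree E v \<le> 3)"

definition leaves :: "nat set \<Rightarrow> nat set set \<Rightarrow> nat set" where
  "leaves N E = {v\<in>N. degree E v = 1}"

definition branch_decomp :: "'a set \<Rightarrow> nat set \<Rightarrow> nat set set \<Rightarrow> (nat \<Rightarrow> 'a) \<Rightarrow> bool" where
  "branch_decomp V N E L \<longleftrightarrow> subcubic_tree N E \<and> bij_betw L (leaves N E) V"

definition edge_side :: "nat set \<Rightarrow> nat set set \<Rightarrow> (nat \<Rightarrow> 'a) \<Rightarrow> nat set \<Rightarrow> 'a set" where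
  "edge_side N E L e =
     L ` {w \<in> leaves N E. ((SOME u. u \<in> e), w) \<in> (adj_rel (E - {e}))\<^sup>*}"

definition bd_width :: "'a set \<Rightarrow> ('a set \<Rightarrow> complex) \<Rightarrow> nat set \<Rightarrow> nat set set \<Rightarrow> (nat \<Rightarrow> 'a) \<Rightarrow> real" where
  "bd_width V \<psi> N E L = Max ((\<lambda>e. ent_entropy V (edge_side N E L e) \<psi>) ` E)"

definition ent_width :: "'a set \<Rightarrow> ('a set \<Rightarrow> complex) \<Rightarrow> real" where
  "ent_width V \<psi> = Inf {bd_width V \<psi> N E L | N E L. branch_decomp V N E L}"

end

theory Submission
  imports Defs "HOL-Analysis.Analysis"
begin


lemma compact_sphere_fun:
  fixes Y :: "'y set"
  assumes "finite Y"
  shows "compact {w :: 'y \<Rightarrow> complex. (\<forall>y. y \<notin> Y \<longrightarrow> w y = 0) \<and> (\<Sum>y\<in>Y. (cmod (w y))\<^sup>2) = 1}"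
proof -
  define K where "K = PiE UNIV (\<lambda>y. if y \<in> Y then cball (0::complex) 1 else {0})"
  have "compactin (product_topology (\<lambda>_. euclidean) UNIV) K"
    unfolding K_def by (subst compactin_PiE) auto
  hence cK: "compact K" by (metis compactin_euclidean_iff euclidean_product_topology)
  have cl: "closed {w :: 'y \<Rightarrow> complex. (\<Sum>y\<in>Y. (cmod (w y))\<^sup>2) = 1}"
    by (intro closed_Collect_eq continuous_intros continuous_on_product_coordinates)
  have sub: "{w :: 'y \<Rightarrow> complex. (\<forall>y. y \<notin> Y \<longrightarrow> w y = 0) \<and> (\<Sum>y\<in>Y. (cmod (w y))\<^sup>2) = 1}
      = K \<inter> {w. (\<Sum>y\<in>Y. (cmod (w y))\<^sup>2) = 1}"
  proof (auto simp: K_def)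
    fix w :: "'y \<Rightarrow> complex" and y assume "y \<in> Y" "(\<Sum>y\<in>Y. (cmod (w y))\<^sup>2) = 1"
    hence "(cmod (w y))\<^sup>2 \<le> 1"
      by (metis assms member_le_sum zero_le_power2)
    thus "cmod (w y) \<le> 1" by (simp add: power_le_one_iff)
  next
    fix x :: "'y \<Rightarrow> complex" and y
    assume "x \<in> (\<Pi>\<^sub>E y\<in>UNIV. if y \<in> Y then cball 0 1 else {0})" "y \<notin> Y"
    thus "x y = 0" by (auto simp: PiE_iff dest!: spec[of _ y])
  qed
  show ?thesis unfolding sub using cK cl by blast
qed


definition ip :: "'x set \<Rightarrow> ('x \<Rightarrow> complex) \<Rightarrow> ('x \<Rightarrow> complex) \<Rightarrow> complex" where
  "ip X u v = (\<Sum>x\<in>X. cnj (u x) * v x)"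

definition nrm2 :: "'x set \<Rightarrow> ('x \<Rightarrow> complex) \<Rightarrow> real" where
  "nrm2 X u = (\<Sum>x\<in>X. (cmod (u x))\<^sup>2)"

definition ON :: "'x set \<Rightarrow> (nat \<Rightarrow> 'x \<Rightarrow> complex) \<Rightarrow> nat \<Rightarrow> bool" where
  "ON X f k \<longleftrightarrow> (\<forall>i<k. \<forall>j<k. ip X (f i) (f j) = (if i = j then 1 else 0))"

lemma ip_self: "ip X u u = complex_of_real (nrm2 X u)"
  unfolding ip_def nrm2_def by (simp add: of_real_sum complex_norm_square mult.commute del: of_real_power)

lemma nrm2_nonneg: "nrm2 X u \<ge> 0"
  unfolding nrm2_def by (simp add: sum_nonneg)

lemma ip_cnj: "cnj (ip X u v) = ip X v u"
  unfolding ip_def by (simp add: mult.commute)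

lemma ip_sum_right: "ip X u (\<lambda>x. \<Sum>i\<in>I. g i x) = (\<Sum>i\<in>I. ip X u (g i))"
  unfolding ip_def by (simp add: sum_distrib_left sum.swap[of _ X])

lemma ip_sum_left: "ip X (\<lambda>x. \<Sum>i\<in>I. g i x) v = (\<Sum>i\<in>I. ip X (g i) v)"
  unfolding ip_def by (simp add: sum_distrib_right sum.swap[of _ X] cnj_sum)

lemma ip_scale_right: "ip X u (\<lambda>x. c * v x) = c * ip X u v"
  unfolding ip_def by (simp add: sum_distrib_left algebra_simps)

lemma ip_scale_left: "ip X (\<lambda>x. c * u x) v = cnj c * ip X u v"
  unfolding ip_def by (simp add: sum_distrib_left algebra_simps)

lemma ip_diff_right: "ip X u (\<lambda>x. v x - w x) = ip X u v - ip X u w"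
  unfolding ip_def by (simp add: sum_subtractf algebra_simps)

lemma ip_diff_left: "ip X (\<lambda>x. v x - w x) u = ip X v u - ip X w u"
  unfolding ip_def by (simp add: sum_subtractf algebra_simps)

lemma nrm2_zero: "finite X \<Longrightarrow> nrm2 X u = 0 \<Longrightarrow> x \<in> X \<Longrightarrow> u x = 0"
  unfolding nrm2_def by (simp add: sum_nonneg_eq_0_iff)

lemma bessel:
  assumes fin: "finite X" and on: "ON X f k"
  shows "(\<Sum>i<k. (cmod (ip X (f i) v))\<^sup>2) \<le> nrm2 X v"
proof -
  define c where "c i = ip X (f i) v" for i
  define w where "w x = v x - (\<Sum>i<k. c i * f i x)" for x
  have A: "ip X (f j) (\<lambda>x. \<Sum>i<k. c i * f i x) = c j" if "j < k" for j
  proof -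
    have "ip X (f j) (\<lambda>x. \<Sum>i<k. c i * f i x) = (\<Sum>i<k. c i * ip X (f j) (f i))"
      by (simp add: ip_sum_right ip_scale_right)
    also have "\<dots> = (\<Sum>i<k. if i = j then c i else 0)"
      using on that unfolding ON_def by (intro sum.cong) auto
    also have "\<dots> = c j" using that by simp
    finally show ?thesis .
  qed
  have B: "ip X (\<lambda>x. \<Sum>i<k. c i * f i x) (\<lambda>x. \<Sum>i<k. c i * f i x) = (\<Sum>i<k. cnj (c i) * c i)"
    by (simp add: ip_sum_left ip_scale_left A)
  have C: "ip X (\<lambda>x. \<Sum>i<k. c i * f i x) v = (\<Sum>i<k. cnj (c i) * c i)"
    by (simp add: ip_sum_left ip_scale_left c_def)
  have D: "ip X v (\<lambda>x. \<Sum>i<k. c i * f i x) = (\<Sum>i<k. cnj (c i) * c i)"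
  proof -
    have "ip X v (\<lambda>x. \<Sum>i<k. c i * f i x) = cnj (ip X (\<lambda>x. \<Sum>i<k. c i * f i x) v)"
      by (simp add: ip_cnj)
    also have "\<dots> = (\<Sum>i<k. cnj (c i) * c i)" unfolding C by (simp add: mult.commute)
    finally show ?thesis .
  qed
  have "ip X w w = ip X v v - (\<Sum>i<k. cnj (c i) * c i)"
    unfolding w_def by (simp add: ip_diff_left ip_diff_right B C D)
  moreover have "(\<Sum>i<k. cnj (c i) * c i) = complex_of_real (\<Sum>i<k. (cmod (c i))\<^sup>2)"
    by (simp add: of_real_sum complex_norm_square mult.commute del: of_real_power)
  ultimately have "complex_of_real (nrm2 X w) = complex_of_real (nrm2 X v - (\<Sum>i<k. (cmod (c i))\<^sup>2))"
    by (simp add: ip_self)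
  hence "nrm2 X w = nrm2 X v - (\<Sum>i<k. (cmod (c i))\<^sup>2)" using of_real_eq_iff by blast
  with nrm2_nonneg[of X w] show ?thesis by (simp add: c_def)
qed

lemma ON_card:
  assumes fin: "finite X" and on: "ON X f k"
  shows "k \<le> card X"
proof -
  have "(\<Sum>i<k. (cmod (f i x))\<^sup>2) \<le> 1" if x: "x \<in> X" for x
  proof -
    define v where "v y = (if y = x then 1 else 0 :: complex)" for y
    have "ip X (f i) v = cnj (f i x)" for i
      unfolding ip_def v_def using fin x by (simp add: if_distrib sum.delta cong: if_cong)
    moreover have "nrm2 X v = 1"
    proof -
      have "nrm2 X v = (\<Sum>y\<in>X. if y = x then 1 else 0)"
        unfolding nrm2_def by (intro sum.cong) (auto simp: v_def)
      thus ?thesis using fin x by simp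
    qed
    ultimately show ?thesis using bessel[OF fin on, of v] by simp
  qed
  hence "(\<Sum>x\<in>X. \<Sum>i<k. (cmod (f i x))\<^sup>2) \<le> (\<Sum>x\<in>X. 1)" by (intro sum_mono) auto
  moreover have "(\<Sum>x\<in>X. \<Sum>i<k. (cmod (f i x))\<^sup>2) = (\<Sum>i<k. nrm2 X (f i))"
    unfolding nrm2_def by (rule sum.swap)
  moreover have "nrm2 X (f i) = 1" if "i < k" for i
    using on that unfolding ON_def by (metis ip_self of_real_eq_1_iff)
  ultimately have "real k \<le> real (card X)" by simp
  thus ?thesis by simp
qed

lemma cauchy_schwarz_ip:
  assumes fin: "finite X"
  shows "(cmod (ip X u v))\<^sup>2 \<le> nrm2 X u * nrm2 X v"
proof (cases "nrm2 X u = 0")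
  case True
  hence "ip X u v = 0" unfolding ip_def using nrm2_zero[OF fin True] by simp
  thus ?thesis using nrm2_nonneg[of X u] nrm2_nonneg[of X v] by simp
next
  case False
  hence pos: "nrm2 X u > 0" using nrm2_nonneg[of X u] by linarith
  define s where "s = sqrt (nrm2 X u)"
  have s: "s > 0" "s * s = nrm2 X u" using pos unfolding s_def by auto
  define f where "f = (\<lambda>(i::nat) x. complex_of_real (1 / s) * u x)"
  have "ip X (f 0) (f 0) = 1"
  proof -
    have "ip X (f 0) (f 0) = complex_of_real ((1/s) * (1/s) * (s * s))"
      unfolding f_def ip_scale_left ip_scale_right ip_self s(2) by simp
    also have "(1/s) * (1/s) * (s * s) = 1" using s(1) by (simp add: field_simps)
    finally show ?thesis by simp
  qed
  hence on: "ON X f 1" unfolding ON_def by auto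
  have "(cmod (ip X (f 0) v))\<^sup>2 \<le> nrm2 X v" using bessel[OF fin on, of v] by simp
  moreover have "ip X (f 0) v = complex_of_real (1 / s) * ip X u v"
    unfolding f_def ip_scale_left by simp
  ultimately have "(cmod (ip X u v))\<^sup>2 / s\<^sup>2 \<le> nrm2 X v"
    using s by (simp add: norm_divide power_divide)
  hence "(cmod (ip X u v))\<^sup>2 \<le> s\<^sup>2 * nrm2 X v" using s
    by (simp add: pos_divide_le_eq mult.commute)
  thus ?thesis using s by (simp add: power2_eq_square)
qed


definition app :: "'y set \<Rightarrow> ('x \<Rightarrow> 'y \<Rightarrow> complex) \<Rightarrow> ('y \<Rightarrow> complex) \<Rightarrow> 'x \<Rightarrow> complex" where
  "app Y R w = (\<lambda>x. \<Sum>y\<in>Y. R x y * w y)"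

definition adj :: "'x set \<Rightarrow> ('x \<Rightarrow> 'y \<Rightarrow> complex) \<Rightarrow> ('x \<Rightarrow> complex) \<Rightarrow> 'y \<Rightarrow> complex" where
  "adj X R u = (\<lambda>y. \<Sum>x\<in>X. cnj (R x y) * u x)"

lemma coord_cont: "continuous_on S (\<lambda>x::'b \<Rightarrow> 'c::topological_space. x i)"
  by (rule continuous_on_subset[OF continuous_on_product_coordinates]) simp

lemma ip_app_adj: "ip X (app Y R w) u = ip Y w (adj X R u)"
proof -
  have "ip X (app Y R w) u = (\<Sum>x\<in>X. \<Sum>y\<in>Y. cnj (w y) * (cnj (R x y) * u x))"
    unfolding ip_def app_def by (simp add: cnj_sum sum_distrib_left sum_distrib_right mult_ac)
  also have "\<dots> = (\<Sum>y\<in>Y. \<Sum>x\<in>X. cnj (w y) * (cnj (R x y) * u x))"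
    by (rule sum.swap)
  also have "\<dots> = ip Y w (adj X R u)"
    unfolding ip_def adj_def by (simp add: sum_distrib_left)
  finally show ?thesis .
qed

lemma nrm2_scale: "nrm2 X (\<lambda>x. c * u x) = (cmod c)\<^sup>2 * nrm2 X u"
  unfolding nrm2_def by (simp add: sum_distrib_left norm_mult power_mult_distrib)

lemma exists_max:
  fixes R :: "'x \<Rightarrow> 'y \<Rightarrow> complex"
  assumes fin: "finite Y" and ne: "Y \<noteq> {}"
  shows "\<exists>w0. (\<forall>y. y \<notin> Y \<longrightarrow> w0 y = 0) \<and> nrm2 Y w0 = 1 \<and>
     (\<forall>w. (\<forall>y. y \<notin> Y \<longrightarrow> w y = 0) \<and> nrm2 Y w = 1 \<longrightarrow> nrm2 X (app Y R w) \<le> nrm2 X (app Y R w0))"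
proof -
  define S where "S = {w :: 'y \<Rightarrow> complex. (\<forall>y. y \<notin> Y \<longrightarrow> w y = 0) \<and> (\<Sum>y\<in>Y. (cmod (w y))\<^sup>2) = 1}"
  have cS: "compact S" unfolding S_def by (rule compact_sphere_fun[OF fin])
  obtain y0 where y0: "y0 \<in> Y" using ne by auto
  define e where "e y = (if y = y0 then 1 else 0 :: complex)" for y
  have "(\<Sum>y\<in>Y. (cmod (e y))\<^sup>2) = (\<Sum>y\<in>Y. if y = y0 then 1 else 0)"
    by (intro sum.cong) (auto simp: e_def)
  hence "e \<in> S" unfolding S_def using fin y0 by (auto simp: e_def)
  hence neS: "S \<noteq> {}" by auto
  have cont: "continuous_on S (\<lambda>w. nrm2 X (app Y R w))"
    unfolding nrm2_def app_def
    by (intro continuous_intros coord_cont)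
  from continuous_attains_sup[OF cS neS cont] obtain w0 where
    "w0 \<in> S" "\<forall>w\<in>S. nrm2 X (app Y R w) \<le> nrm2 X (app Y R w0)" by blast
  thus ?thesis unfolding S_def nrm2_def[of Y] by blast
qed

lemma svd_step:
  fixes R :: "'x \<Rightarrow> 'y \<Rightarrow> complex"
  assumes finX: "finite X" and finY: "finite Y" and x0: "x0 \<in> X" and y0: "y0 \<in> Y"
    and nz: "R x0 y0 \<noteq> 0"
  shows "\<exists>\<sigma> u g. \<sigma> > 0 \<and> nrm2 X u = 1 \<and> nrm2 Y g = 1 \<and>
     (\<forall>x\<in>X. (\<Sum>y\<in>Y. R x y * cnj (g y)) = complex_of_real \<sigma> * u x) \<and>
     (\<forall>y\<in>Y. (\<Sum>x\<in>X. cnj (u x) * R x y) = complex_of_real \<sigma> * g y)"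
proof -
  obtain w0 where w0out: "\<forall>y. y \<notin> Y \<longrightarrow> w0 y = 0" and w0n: "nrm2 Y w0 = 1"
    and w0max: "\<And>w. (\<forall>y. y \<notin> Y \<longrightarrow> w y = 0) \<Longrightarrow> nrm2 Y w = 1 \<Longrightarrow> nrm2 X (app Y R w) \<le> nrm2 X (app Y R w0)"
    using exists_max[OF finY, where R=R and X=X] y0 by blast
  define F0 where "F0 = nrm2 X (app Y R w0)"
  define e where "e y = (if y = y0 then 1 else 0 :: complex)" for y
  have "nrm2 Y e = (\<Sum>y\<in>Y. if y = y0 then 1 else 0)"
    unfolding nrm2_def by (intro sum.cong) (auto simp: e_def)
  hence en: "nrm2 Y e = 1" using finY y0 by simp
  have "app Y R e x = R x y0" for x
    unfolding app_def e_def using finY y0 by (simp add: if_distrib sum.delta cong: if_cong)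
  hence "nrm2 X (app Y R e) = (\<Sum>x\<in>X. (cmod (R x y0))\<^sup>2)" unfolding nrm2_def by simp
  also have "\<dots> \<ge> (cmod (R x0 y0))\<^sup>2" using finX x0 by (intro member_le_sum) auto
  finally have "nrm2 X (app Y R e) > 0" using nz by (smt (verit) zero_less_power2 norm_eq_zero)
  moreover have "nrm2 X (app Y R e) \<le> F0" unfolding F0_def
    using w0max[of e] en y0 by (auto simp: e_def)
  ultimately have F0pos: "F0 > 0" by linarith
  have bound: "nrm2 X (app Y R w) \<le> F0 * nrm2 Y w" for w
  proof (cases "nrm2 Y w = 0")
    case True
    hence "app Y R w x = 0" for x unfolding app_def using nrm2_zero[OF finY True] by simp
    hence "nrm2 X (app Y R w) = 0" unfolding nrm2_def by simp
    thus ?thesis using True by simp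
  next
    case False
    define t where "t = nrm2 Y w"
    have t: "t > 0" using False nrm2_nonneg[of Y w] unfolding t_def by linarith
    define w' where "w' y = (if y \<in> Y then complex_of_real (1 / sqrt t) * w y else 0)" for y
    have "nrm2 Y w' = nrm2 Y (\<lambda>y. complex_of_real (1 / sqrt t) * w y)"
      unfolding nrm2_def w'_def by (intro sum.cong) auto
    also have "\<dots> = (1 / sqrt t)\<^sup>2 * t" unfolding nrm2_scale t_def using nrm2_nonneg[of Y w] by (simp add: abs_of_nonneg norm_divide)
    also have "\<dots> = 1" using t by (simp add: power_divide)
    finally have w'n: "nrm2 Y w' = 1" .
    have appw': "app Y R w' = (\<lambda>x. complex_of_real (1 / sqrt t) * app Y R w x)"
      unfolding app_def w'_def by (auto simp: sum_distrib_left mult_ac intro!: sum.cong)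
    have "nrm2 X (app Y R w') = (1 / sqrt t)\<^sup>2 * nrm2 X (app Y R w)"
      unfolding appw' nrm2_scale using t by (simp add: abs_of_nonneg norm_divide)
    also have "\<dots> = nrm2 X (app Y R w) / t" using t by (simp add: power_divide)
    finally have "nrm2 X (app Y R w) / t \<le> F0"
      using w0max[of w'] w'n unfolding F0_def by (auto simp: w'_def)
    thus ?thesis using t unfolding t_def[symmetric] by (simp add: pos_divide_le_eq mult.commute)
  qed
  define \<sigma> where "\<sigma> = sqrt F0"
  have sig: "\<sigma> > 0" "\<sigma> * \<sigma> = F0" using F0pos unfolding \<sigma>_def by auto
  define u where "u = (\<lambda>x. complex_of_real (1 / \<sigma>) * app Y R w0 x)"
  have appu: "app Y R w0 = (\<lambda>x. complex_of_real \<sigma> * u x)"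
    unfolding u_def using sig by (auto simp flip: of_real_mult)
  have "nrm2 X u = (cmod (complex_of_real (1 / \<sigma>)))\<^sup>2 * F0"
    unfolding u_def nrm2_scale F0_def ..
  also have "\<dots> = (1 / \<sigma>)\<^sup>2 * (\<sigma> * \<sigma>)" unfolding sig(2) using sig(1)
    by (simp only: norm_of_real abs_of_pos zero_less_divide_1_iff)
  also have "\<dots> = 1" using sig(1) by (simp add: power2_eq_square)
  finally have un: "nrm2 X u = 1" .
  define z where "z = adj X R u"
  have "ip X (app Y R z) u = ip Y z z" unfolding ip_app_adj z_def ..
  hence ipzz: "complex_of_real (nrm2 Y z) = ip X (app Y R z) u"
    by (simp only: ip_self)
  have "(nrm2 Y z)\<^sup>2 = (cmod (ip X (app Y R z) u))\<^sup>2"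
    using ipzz by (metis norm_of_real power2_abs)
  also have "\<dots> \<le> nrm2 X (app Y R z) * nrm2 X u" by (rule cauchy_schwarz_ip[OF finX])
  also have "\<dots> \<le> F0 * nrm2 Y z" using bound[of z] un by simp
  finally have zz: "(nrm2 Y z)\<^sup>2 \<le> F0 * nrm2 Y z" .
  have zle: "nrm2 Y z \<le> F0"
  proof (cases "nrm2 Y z = 0")
    case True thus ?thesis using F0pos by simp
  next
    case False
    hence "nrm2 Y z > 0" using nrm2_nonneg[of Y z] by linarith
    thus ?thesis using zz by (simp add: power2_eq_square)
  qed
  have ipwz: "ip Y w0 z = complex_of_real \<sigma>"
  proof -
    have "ip Y w0 z = ip X (app Y R w0) u" by (simp add: ip_app_adj z_def)
    also have "\<dots> = complex_of_real \<sigma>" unfolding appu ip_scale_left ip_self un by simp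
    finally show ?thesis .
  qed
  have ipzw: "ip Y z w0 = complex_of_real \<sigma>"
  proof -
    have "ip Y z w0 = cnj (ip Y w0 z)" by (simp add: ip_cnj)
    thus ?thesis unfolding ipwz by simp
  qed
  have "complex_of_real (nrm2 Y (\<lambda>y. z y - complex_of_real \<sigma> * w0 y))
      = ip Y z z - complex_of_real \<sigma> * ip Y z w0 - cnj (complex_of_real \<sigma>) * ip Y w0 z
        + cnj (complex_of_real \<sigma>) * complex_of_real \<sigma> * ip Y w0 w0"
    unfolding ip_self[symmetric] ip_diff_left ip_diff_right ip_scale_left ip_scale_right
    by (simp add: algebra_simps)
  also have "\<dots> = complex_of_real (nrm2 Y z - F0)"
    unfolding ipzw ipwz ip_self w0n sig(2)[symmetric] by simp
  finally have "nrm2 Y (\<lambda>y. z y - complex_of_real \<sigma> * w0 y) = nrm2 Y z - F0"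
    using of_real_eq_iff by blast
  hence "nrm2 Y (\<lambda>y. z y - complex_of_real \<sigma> * w0 y) = 0"
    using zle nrm2_nonneg[of Y "\<lambda>y. z y - complex_of_real \<sigma> * w0 y"] by linarith
  hence zeq: "z y = complex_of_real \<sigma> * w0 y" if "y \<in> Y" for y
  proof -
    assume h: "nrm2 Y (\<lambda>y. z y - complex_of_real \<sigma> * w0 y) = 0"
    have "z y - complex_of_real \<sigma> * w0 y = 0" using nrm2_zero[OF finY h that] .
    thus ?thesis by simp
  qed
  define g where "g y = cnj (w0 y)" for y
  show ?thesis
  proof (intro exI conjI ballI)
    show "\<sigma> > 0" by fact
    show "nrm2 X u = 1" by fact
    show "nrm2 Y g = 1" using w0n unfolding nrm2_def g_def by simp
  next
    fix x assume "x \<in> X"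
    have "(\<Sum>y\<in>Y. R x y * cnj (g y)) = app Y R w0 x" unfolding app_def g_def by simp
    thus "(\<Sum>y\<in>Y. R x y * cnj (g y)) = complex_of_real \<sigma> * u x" unfolding appu by simp
  next
    fix y assume y: "y \<in> Y"
    have "(\<Sum>x\<in>X. cnj (u x) * R x y) = cnj (z y)"
      unfolding z_def adj_def by (simp add: mult.commute)
    thus "(\<Sum>x\<in>X. cnj (u x) * R x y) = complex_of_real \<sigma> * g y"
      unfolding zeq[OF y] g_def by simp
  qed
qed


definition res :: "('x \<Rightarrow> 'y \<Rightarrow> complex) \<Rightarrow> (nat \<Rightarrow> real) \<Rightarrow> (nat \<Rightarrow> 'x \<Rightarrow> complex)
   \<Rightarrow> (nat \<Rightarrow> 'y \<Rightarrow> complex) \<Rightarrow> nat \<Rightarrow> 'x \<Rightarrow> 'y \<Rightarrow> complex" where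
  "res M \<alpha> f g m x y = M x y - (\<Sum>i<m. complex_of_real (\<alpha> i) * f i x * g i y)"

definition partial where
  "partial X Y M m \<alpha> f g \<longleftrightarrow> (\<forall>i<m. \<alpha> i > 0) \<and> ON X f m \<and> ON Y g m \<and>
     (\<forall>i<m. \<forall>y\<in>Y. (\<Sum>x\<in>X. cnj (f i x) * res M \<alpha> f g m x y) = 0) \<and>
     (\<forall>i<m. \<forall>x\<in>X. (\<Sum>y\<in>Y. res M \<alpha> f g m x y * cnj (g i y)) = 0)"

lemma ON_extend:
  assumes "ON X f m" "ip X u u = 1" "\<And>i. i < m \<Longrightarrow> ip X (f i) u = 0"
  shows "ON X (f(m := u)) (Suc m)"
  unfolding ON_def
proof (intro allI impI)
  fix i j assume i: "i < Suc m" and j: "j < Suc m"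
  have rev: "ip X u (f i) = 0" if "i < m" for i
    using assms(3)[OF that] ip_cnj[of X "f i" u] by simp
  show "ip X ((f(m := u)) i) ((f(m := u)) j) = (if i = j then 1 else 0)"
    using i j assms(1) assms(2) assms(3) rev unfolding ON_def
    by (auto simp: less_Suc_eq)
qed

lemma sum_res_left:
  "(\<Sum>x\<in>X. cnj (a x) * (R x y - c * u x * h y)) = (\<Sum>x\<in>X. cnj (a x) * R x y) - c * ip X a u * h y"
  unfolding ip_def by (simp add: right_diff_distrib sum_subtractf sum_distrib_left sum_distrib_right mult_ac)

lemma sum_res_right:
  "(\<Sum>y\<in>Y. (R x y - c * u x * h y) * cnj (b y)) = (\<Sum>y\<in>Y. R x y * cnj (b y)) - c * u x * ip Y b h"
  unfolding ip_def by (simp add: left_diff_distrib right_diff_distrib sum_subtractf sum_distrib_left sum_distrib_right mult_ac)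

lemma partial_step:
  assumes finX: "finite X" and finY: "finite Y" and P: "partial X Y M m \<alpha> f g"
    and x0: "x0 \<in> X" and y0: "y0 \<in> Y" and nz: "res M \<alpha> f g m x0 y0 \<noteq> 0"
  shows "\<exists>\<alpha>' f' g'. partial X Y M (Suc m) \<alpha>' f' g'"
proof -
  define R where "R = res M \<alpha> f g m"
  obtain \<sigma> u h where sig: "\<sigma> > 0" and un: "nrm2 X u = 1" and hn: "nrm2 Y h = 1"
    and hu: "\<And>x. x \<in> X \<Longrightarrow> (\<Sum>y\<in>Y. R x y * cnj (h y)) = complex_of_real \<sigma> * u x"
    and hh: "\<And>y. y \<in> Y \<Longrightarrow> (\<Sum>x\<in>X. cnj (u x) * R x y) = complex_of_real \<sigma> * h y"
    using svd_step[OF finX finY x0 y0, of R] nz unfolding R_def by blast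
  have sig0: "complex_of_real \<sigma> \<noteq> 0" using sig by simp
  from P have apos: "\<forall>i<m. \<alpha> i > 0" and onf: "ON X f m" and ong: "ON Y g m"
    and invf: "\<And>i y. i < m \<Longrightarrow> y \<in> Y \<Longrightarrow> (\<Sum>x\<in>X. cnj (f i x) * R x y) = 0"
    and invg: "\<And>i x. i < m \<Longrightarrow> x \<in> X \<Longrightarrow> (\<Sum>y\<in>Y. R x y * cnj (g i y)) = 0"
    unfolding partial_def R_def by auto
  have orth1: "ip X (f i) u = 0" if i: "i < m" for i
  proof -
    have "complex_of_real \<sigma> * ip X (f i) u = (\<Sum>x\<in>X. cnj (f i x) * (complex_of_real \<sigma> * u x))"
      unfolding ip_def by (simp add: sum_distrib_left mult_ac)
    also have "\<dots> = (\<Sum>x\<in>X. cnj (f i x) * (\<Sum>y\<in>Y. R x y * cnj (h y)))"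
      using hu by (intro sum.cong) auto
    also have "\<dots> = (\<Sum>x\<in>X. \<Sum>y\<in>Y. cnj (f i x) * R x y * cnj (h y))"
      by (simp add: sum_distrib_left mult_ac)
    also have "\<dots> = (\<Sum>y\<in>Y. \<Sum>x\<in>X. cnj (f i x) * R x y * cnj (h y))"
      by (rule sum.swap)
    also have "\<dots> = (\<Sum>y\<in>Y. (\<Sum>x\<in>X. cnj (f i x) * R x y) * cnj (h y))"
      by (simp add: sum_distrib_right)
    also have "\<dots> = 0" using invf[OF i] by simp
    finally show ?thesis using sig0 by simp
  qed
  have orth2: "ip Y (g i) h = 0" if i: "i < m" for i
  proof -
    have "complex_of_real \<sigma> * ip Y (g i) h = (\<Sum>y\<in>Y. cnj (g i y) * (complex_of_real \<sigma> * h y))"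
      unfolding ip_def by (simp add: sum_distrib_left mult_ac)
    also have "\<dots> = (\<Sum>y\<in>Y. cnj (g i y) * (\<Sum>x\<in>X. cnj (u x) * R x y))"
      using hh by (intro sum.cong) auto
    also have "\<dots> = (\<Sum>y\<in>Y. \<Sum>x\<in>X. cnj (u x) * (R x y * cnj (g i y)))"
      by (simp add: sum_distrib_left mult_ac)
    also have "\<dots> = (\<Sum>x\<in>X. \<Sum>y\<in>Y. cnj (u x) * (R x y * cnj (g i y)))"
      by (rule sum.swap)
    also have "\<dots> = (\<Sum>x\<in>X. cnj (u x) * (\<Sum>y\<in>Y. R x y * cnj (g i y)))"
      by (simp add: sum_distrib_left)
    also have "\<dots> = 0" using invg[OF i] by simp
    finally show ?thesis using sig0 by simp
  qed
  define \<alpha>' where "\<alpha>' = \<alpha>(m := \<sigma>)"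
  define f' where "f' = f(m := u)"
  define g' where "g' = g(m := h)"
  have R': "res M \<alpha>' f' g' (Suc m) x y = R x y - complex_of_real \<sigma> * u x * h y" for x y
  proof -
    have "(\<Sum>i<m. complex_of_real (\<alpha>' i) * f' i x * g' i y) = (\<Sum>i<m. complex_of_real (\<alpha> i) * f i x * g i y)"
      unfolding \<alpha>'_def f'_def g'_def by (intro sum.cong) auto
    thus ?thesis unfolding res_def R_def by (simp add: \<alpha>'_def f'_def g'_def algebra_simps)
  qed
  have uu: "ip X u u = 1" using un by (simp add: ip_self)
  have hh1: "ip Y h h = 1" using hn by (simp add: ip_self)
  have "partial X Y M (Suc m) \<alpha>' f' g'"
    unfolding partial_def
  proof (intro conjI allI impI ballI)
    fix i assume "i < Suc m" thus "\<alpha>' i > 0" using apos sig unfolding \<alpha>'_def by (auto simp: less_Suc_eq)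
  next
    show "ON X f' (Suc m)" unfolding f'_def by (rule ON_extend[OF onf uu orth1])
  next
    show "ON Y g' (Suc m)" unfolding g'_def by (rule ON_extend[OF ong hh1 orth2])
  next
    fix i y assume i: "i < Suc m" and y: "y \<in> Y"
    show "(\<Sum>x\<in>X. cnj (f' i x) * res M \<alpha>' f' g' (Suc m) x y) = 0"
      unfolding R' sum_res_left
    proof (cases "i = m")
      case True thus "(\<Sum>x\<in>X. cnj (f' i x) * R x y) - complex_of_real \<sigma> * ip X (f' i) u * h y = 0"
        unfolding f'_def using hh[OF y] uu by simp
    next
      case False hence "i < m" using i by simp
      thus "(\<Sum>x\<in>X. cnj (f' i x) * R x y) - complex_of_real \<sigma> * ip X (f' i) u * h y = 0"
        unfolding f'_def using invf[OF _ y] orth1 by simp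
    qed
  next
    fix i x assume i: "i < Suc m" and x: "x \<in> X"
    show "(\<Sum>y\<in>Y. res M \<alpha>' f' g' (Suc m) x y * cnj (g' i y)) = 0"
      unfolding R' sum_res_right
    proof (cases "i = m")
      case True thus "(\<Sum>y\<in>Y. R x y * cnj (g' i y)) - complex_of_real \<sigma> * u x * ip Y (g' i) h = 0"
        unfolding g'_def using hu[OF x] hh1 by simp
    next
      case False hence "i < m" using i by simp
      thus "(\<Sum>y\<in>Y. R x y * cnj (g' i y)) - complex_of_real \<sigma> * u x * ip Y (g' i) h = 0"
        unfolding g'_def using invg[OF _ x] orth2 by simp
    qed
  qed
  thus ?thesis by blast
qed

lemma svd_exists:
  fixes M :: "'x \<Rightarrow> 'y \<Rightarrow> complex"
  assumes finX: "finite X" and finY: "finite Y"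
  shows "\<exists>k \<alpha> f g. (\<forall>i<k. \<alpha> i > 0) \<and> ON X f k \<and> ON Y g k \<and>
     (\<forall>x\<in>X. \<forall>y\<in>Y. M x y = (\<Sum>i<k. complex_of_real (\<alpha> i) * f i x * g i y))"
    (is "\<exists>k \<alpha> f g. ?full k \<alpha> f g")
proof -
  have main: "(\<exists>k \<alpha> f g. ?full k \<alpha> f g) \<or> (\<exists>\<alpha> f g. partial X Y M m \<alpha> f g)" for m
  proof (induction m)
    case 0
    have "partial X Y M 0 (\<lambda>_. 0) (\<lambda>_ _. 0) (\<lambda>_ _. 0)"
      unfolding partial_def ON_def by simp
    thus ?case by blast
  next
    case (Suc m)
    show ?case
    proof (cases "\<exists>k \<alpha> f g. ?full k \<alpha> f g")
      case True thus ?thesis by blast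
    next
      case False
      with Suc.IH obtain \<alpha> f g where P: "partial X Y M m \<alpha> f g" by blast
      show ?thesis
      proof (cases "\<exists>x\<in>X. \<exists>y\<in>Y. res M \<alpha> f g m x y \<noteq> 0")
        case True
        then obtain x0 y0 where "x0 \<in> X" "y0 \<in> Y" "res M \<alpha> f g m x0 y0 \<noteq> 0" by blast
        from partial_step[OF finX finY P this] show ?thesis by blast
      next
        case False
        hence "?full m \<alpha> f g" using P unfolding partial_def res_def by auto
        thus ?thesis by blast
      qed
    qed
  qed
  show ?thesis
  proof (rule ccontr)
    assume nf: "\<not> (\<exists>k \<alpha> f g. ?full k \<alpha> f g)"
    then obtain \<alpha> f g where "partial X Y M (Suc (card X)) \<alpha> f g" using main by blast
    hence "ON X f (Suc (card X))" unfolding partial_def by blast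
    from ON_card[OF finX this] show False by simp
  qed
qed


lemma ortho_ON: "orthonormal_family A f k \<longleftrightarrow> ON (Pow A) f k"
  unfolding orthonormal_family_def ON_def ip_def ..

lemma schmidt_exists:
  assumes fin: "finite V" and AV: "A \<subseteq> V"
  shows "\<exists>k \<alpha> f g. schmidt_decomp V A \<psi> k \<alpha> f g"
proof -
  have finA: "finite A" using fin AV finite_subset by blast
  obtain k \<alpha> f g where a: "\<forall>i<k. \<alpha> i > 0" and of: "ON (Pow A) f k" and og: "ON (Pow (V - A)) g k"
    and M: "\<forall>x\<in>Pow A. \<forall>y\<in>Pow (V - A). \<psi> (x \<union> y) = (\<Sum>i<k. complex_of_real (\<alpha> i) * f i x * g i y)"
    using svd_exists[of "Pow A" "Pow (V - A)" "\<lambda>P Q. \<psi> (P \<union> Q)"] finA fin by auto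
  have "\<psi> S = (\<Sum>i<k. complex_of_real (\<alpha> i) * f i (S \<inter> A) * g i (S - A))" if "S \<subseteq> V" for S
  proof -
    have "S = (S \<inter> A) \<union> (S - A)" by blast
    hence "\<psi> S = \<psi> ((S \<inter> A) \<union> (S - A))" by simp
    also have "\<dots> = (\<Sum>i<k. complex_of_real (\<alpha> i) * f i (S \<inter> A) * g i (S - A))"
      using M that by auto
    finally show ?thesis .
  qed
  thus ?thesis unfolding schmidt_decomp_def ortho_ON using a of og by blast
qed

lemma parseval:
  assumes "ON Y g k"
  shows "nrm2 Y (\<lambda>y. \<Sum>i<k. c i * g i y) = (\<Sum>i<k. (cmod (c i))\<^sup>2)"
proof -
  have A: "ip Y (g j) (\<lambda>y. \<Sum>i<k. c i * g i y) = c j" if "j < k" for j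
  proof -
    have "ip Y (g j) (\<lambda>y. \<Sum>i<k. c i * g i y) = (\<Sum>i<k. c i * ip Y (g j) (g i))"
      by (simp add: ip_sum_right ip_scale_right)
    also have "\<dots> = (\<Sum>i<k. if i = j then c i else 0)"
      using assms that unfolding ON_def by (intro sum.cong) auto
    also have "\<dots> = c j" using that by simp
    finally show ?thesis .
  qed
  have "complex_of_real (nrm2 Y (\<lambda>y. \<Sum>i<k. c i * g i y)) = (\<Sum>i<k. cnj (c i) * c i)"
    unfolding ip_self[symmetric] by (simp add: ip_sum_left ip_scale_left A)
  also have "\<dots> = complex_of_real (\<Sum>i<k. (cmod (c i))\<^sup>2)"
    by (simp add: of_real_sum complex_norm_square mult.commute del: of_real_power)
  finally show ?thesis using of_real_eq_iff by blast
qed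

lemma schmidt_sum:
  assumes ps: "pure_state V \<psi>" and AV: "A \<subseteq> V" and sd: "schmidt_decomp V A \<psi> k \<alpha> f g"
  shows "(\<Sum>i<k. (\<alpha> i)\<^sup>2) = 1"
proof -
  have fin: "finite V" using ps unfolding pure_state_def by blast
  have finA: "finite A" using fin AV finite_subset by blast
  from sd have of: "ON (Pow A) f k" and og: "ON (Pow (V - A)) g k"
    and dec: "\<And>S. S \<subseteq> V \<Longrightarrow> \<psi> S = (\<Sum>i<k. complex_of_real (\<alpha> i) * f i (S \<inter> A) * g i (S - A))"
    unfolding schmidt_decomp_def ortho_ON by auto
  have bij: "bij_betw (\<lambda>(P, Q). P \<union> Q) (Pow A \<times> Pow (V - A)) (Pow V)"
  proof (rule bij_betw_byWitness[where f' = "\<lambda>S. (S \<inter> A, S - A)"])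
    show "\<forall>a\<in>Pow A \<times> Pow (V - A). (\<lambda>S. (S \<inter> A, S - A)) ((\<lambda>(P, Q). P \<union> Q) a) = a" by auto
    show "\<forall>a'\<in>Pow V. (\<lambda>(P, Q). P \<union> Q) ((\<lambda>S. (S \<inter> A, S - A)) a') = a'" by auto
    show "(\<lambda>(P, Q). P \<union> Q) ` (Pow A \<times> Pow (V - A)) \<subseteq> Pow V" using AV by auto
    show "(\<lambda>S. (S \<inter> A, S - A)) ` Pow V \<subseteq> Pow A \<times> Pow (V - A)" by auto
  qed
  have "1 = (\<Sum>S\<in>Pow V. (cmod (\<psi> S))\<^sup>2)" using ps unfolding pure_state_def by simp
  also have "\<dots> = (\<Sum>PQ\<in>Pow A \<times> Pow (V - A). (cmod (\<psi> ((\<lambda>(P, Q). P \<union> Q) PQ)))\<^sup>2)"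
    using sum.reindex_bij_betw[OF bij, of "\<lambda>S. (cmod (\<psi> S))\<^sup>2"] by simp
  also have "\<dots> = (\<Sum>P\<in>Pow A. \<Sum>Q\<in>Pow (V - A). (cmod (\<psi> (P \<union> Q)))\<^sup>2)"
    by (simp add: sum.cartesian_product split_def)
  also have "\<dots> = (\<Sum>P\<in>Pow A. nrm2 (Pow (V - A)) (\<lambda>Q. \<Sum>i<k. (complex_of_real (\<alpha> i) * f i P) * g i Q))"
    unfolding nrm2_def
  proof (intro sum.cong refl)
    fix P Q assume P: "P \<in> Pow A" and Q: "Q \<in> Pow (V - A)"
    have "P \<union> Q \<subseteq> V" using P Q AV by auto
    moreover have "(P \<union> Q) \<inter> A = P" "(P \<union> Q) - A = Q" using P Q by auto
    ultimately show "(cmod (\<psi> (P \<union> Q)))\<^sup>2 = (cmod (\<Sum>i<k. complex_of_real (\<alpha> i) * f i P * g i Q))\<^sup>2"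
      using dec by simp
  qed
  also have "\<dots> = (\<Sum>P\<in>Pow A. \<Sum>i<k. (\<alpha> i)\<^sup>2 * (cmod (f i P))\<^sup>2)"
    by (simp add: parseval[OF og] norm_mult power_mult_distrib)
  also have "\<dots> = (\<Sum>i<k. (\<alpha> i)\<^sup>2 * nrm2 (Pow A) (f i))"
    unfolding nrm2_def by (simp add: sum.swap[of _ "Pow A"] sum_distrib_left)
  also have "\<dots> = (\<Sum>i<k. (\<alpha> i)\<^sup>2)"
  proof (intro sum.cong refl)
    fix i assume "i \<in> {..<k}"
    hence "ip (Pow A) (f i) (f i) = 1" using of unfolding ON_def by simp
    hence "nrm2 (Pow A) (f i) = 1" by (metis ip_self of_real_eq_1_iff)
    thus "(\<alpha> i)\<^sup>2 * nrm2 (Pow A) (f i) = (\<alpha> i)\<^sup>2" by simp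
  qed
  finally show ?thesis by simp
qed

lemma entropy_bounds:
  fixes \<alpha> :: "nat \<Rightarrow> real"
  assumes pos: "\<forall>i<k. \<alpha> i > 0" and s: "(\<Sum>i<k. (\<alpha> i)\<^sup>2) = 1" and kb: "k \<le> 2 ^ a"
  shows "0 \<le> - (\<Sum>i<k. (\<alpha> i)\<^sup>2 * log 2 ((\<alpha> i)\<^sup>2))"
    and "- (\<Sum>i<k. (\<alpha> i)\<^sup>2 * log 2 ((\<alpha> i)\<^sup>2)) \<le> real a"
proof -
  define p where "p i = (\<alpha> i)\<^sup>2" for i
  have pp: "p i > 0" if "i < k" for i
  proof -
    have "\<alpha> i > 0" using pos that by blast
    thus ?thesis unfolding p_def by simp
  qed
  have sp: "(\<Sum>i<k. p i) = 1" using s unfolding p_def .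
  have p1: "p i \<le> 1" if "i < k" for i
  proof -
    have "p i \<le> (\<Sum>j<k. p j)" using that pp by (intro member_le_sum) (auto intro: less_imp_le)
    thus ?thesis using sp by simp
  qed
  have "(\<Sum>i<k. p i * log 2 (p i)) \<le> 0"
  proof (intro sum_nonpos)
    fix i assume "i \<in> {..<k}"
    hence "0 < p i" "p i \<le> 1" using pp p1 by auto
    hence "log 2 (p i) \<le> 0" by simp
    thus "p i * log 2 (p i) \<le> 0" using \<open>0 < p i\<close> by (simp add: mult_nonneg_nonpos)
  qed
  thus "0 \<le> - (\<Sum>i<k. (\<alpha> i)\<^sup>2 * log 2 ((\<alpha> i)\<^sup>2))" unfolding p_def by simp
  have k0: "k > 0" using sp by (cases k) auto
  have key: "p i * ln (1 / (real k * p i)) \<le> 1 / real k - p i" if "i < k" for i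
  proof -
    have "ln (1 / (real k * p i)) \<le> 1 / (real k * p i) - 1"
      using pp[OF that] k0 by (intro ln_le_minus_one) simp
    hence "p i * ln (1 / (real k * p i)) \<le> p i * (1 / (real k * p i) - 1)"
      using pp[OF that] by (simp add: mult_left_mono)
    also have "\<dots> = 1 / real k - p i" using pp[OF that] k0 by (simp add: field_simps)
    finally show ?thesis .
  qed
  have "(\<Sum>i<k. p i * ln (1 / (real k * p i))) \<le> (\<Sum>i<k. 1 / real k - p i)"
    using key by (intro sum_mono) auto
  also have "\<dots> = 0" using sp k0 by (simp add: sum_subtractf)
  finally have A: "(\<Sum>i<k. p i * ln (1 / (real k * p i))) \<le> 0" .
  have "(\<Sum>i<k. p i * ln (1 / (real k * p i))) = (\<Sum>i<k. - (p i * ln (p i)) - p i * ln (real k))"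
    using pp k0 by (intro sum.cong refl) (simp add: ln_div ln_mult algebra_simps)
  also have "\<dots> = - (\<Sum>i<k. p i * ln (p i)) - ln (real k)"
    using sp by (simp add: sum_subtractf sum_negf sum_distrib_right[symmetric])
  finally have "- (\<Sum>i<k. p i * ln (p i)) \<le> ln (real k)" using A by simp
  hence "- (\<Sum>i<k. p i * ln (p i)) / ln 2 \<le> ln (real k) / ln 2"
    by (intro divide_right_mono) auto
  moreover have "- (\<Sum>i<k. p i * log 2 (p i)) = - (\<Sum>i<k. p i * ln (p i)) / ln 2"
    unfolding log_def by (simp add: sum_divide_distrib)
  moreover have "ln (real k) / ln 2 \<le> real a"
  proof -
    have "ln (real k) \<le> ln (2 ^ a)" using k0 kb by (subst ln_le_cancel_iff) (auto simp flip: of_nat_power)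
    also have "\<dots> = real a * ln 2" by (simp add: ln_realpow)
    finally show ?thesis by (simp add: pos_divide_le_eq)
  qed
  ultimately show "- (\<Sum>i<k. (\<alpha> i)\<^sup>2 * log 2 ((\<alpha> i)\<^sup>2)) \<le> real a" unfolding p_def by linarith
qed

lemma ent_entropy_bounds:
  assumes ps: "pure_state V \<psi>" and AV: "A \<subseteq> V"
  shows "0 \<le> ent_entropy V A \<psi>" "ent_entropy V A \<psi> \<le> real (card A)"
    "ent_entropy V A \<psi> \<le> real (card (V - A))"
proof -
  have fin: "finite V" using ps unfolding pure_state_def by blast
  have finA: "finite A" using fin AV finite_subset by blast
  obtain k \<alpha> f g where sd: "schmidt_decomp V A \<psi> k \<alpha> f g" using schmidt_exists[OF fin AV] by blast
  let ?P = "\<lambda>h. \<exists>k \<alpha> f g. schmidt_decomp V A \<psi> k \<alpha> f g \<and> h = - (\<Sum>i<k. (\<alpha> i)\<^sup>2 * log 2 ((\<alpha> i)\<^sup>2))"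
  have "?P (SOME h. ?P h)" by (rule someI_ex) (use sd in blast)
  then obtain k \<alpha> f g where sd: "schmidt_decomp V A \<psi> k \<alpha> f g"
    and h: "ent_entropy V A \<psi> = - (\<Sum>i<k. (\<alpha> i)\<^sup>2 * log 2 ((\<alpha> i)\<^sup>2))"
    unfolding ent_entropy_def by blast
  from sd have pos: "\<forall>i<k. \<alpha> i > 0" and of: "ON (Pow A) f k" and og: "ON (Pow (V - A)) g k"
    unfolding schmidt_decomp_def ortho_ON by auto
  have s: "(\<Sum>i<k. (\<alpha> i)\<^sup>2) = 1" by (rule schmidt_sum[OF ps AV sd])
  have k1: "k \<le> 2 ^ card A" using ON_card[OF _ of] finA by (simp add: card_Pow)
  have k2: "k \<le> 2 ^ card (V - A)" using ON_card[OF _ og] fin by (simp add: card_Pow)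
  show "0 \<le> ent_entropy V A \<psi>" unfolding h by (rule entropy_bounds(1)[OF pos s k1])
  show "ent_entropy V A \<psi> \<le> real (card A)" unfolding h by (rule entropy_bounds(2)[OF pos s k1])
  show "ent_entropy V A \<psi> \<le> real (card (V - A))" unfolding h by (rule entropy_bounds(2)[OF pos s k2])
qed


definition pedges :: "nat set \<Rightarrow> (nat \<Rightarrow> nat) \<Rightarrow> nat set set" where
  "pedges N p = (\<lambda>w. {w, p w}) ` (N - {0})"

inductive_set desc :: "nat set \<Rightarrow> (nat \<Rightarrow> nat) \<Rightarrow> nat \<Rightarrow> nat set" for N p v where
  desc_base: "v \<in> desc N p v"
| desc_step: "w \<in> N \<Longrightarrow> w \<noteq> 0 \<Longrightarrow> p w \<in> desc N p v \<Longrightarrow> w \<in> desc N p v"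

lemma adj_rel_sym: "sym (adj_rel E)"
  unfolding adj_rel_def sym_def by (auto simp: insert_commute)

lemma rt_sym: "(a, b) \<in> (adj_rel E)\<^sup>* \<Longrightarrow> (b, a) \<in> (adj_rel E)\<^sup>*"
  using sym_rtrancl[OF adj_rel_sym[of E]] unfolding sym_def by blast

locale ptree =
  fixes N :: "nat set" and p :: "nat \<Rightarrow> nat"
  assumes finN: "finite N" and root: "0 \<in> N"
    and par: "\<And>v. v \<in> N \<Longrightarrow> v \<noteq> 0 \<Longrightarrow> p v \<in> N \<and> p v < v"
begin

abbreviation "E \<equiv> pedges N p"

lemma desc_ge: "w \<in> desc N p v \<Longrightarrow> v \<le> w"
  by (induction rule: desc.induct) (auto dest: par)

lemma edge_neq:
  assumes "v \<in> N" "v \<noteq> 0" "w \<in> N" "w \<noteq> 0" "{w, p w} = {v, p v}"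
  shows "w = v"
  using assms par[of v] par[of w] by (auto simp: doubleton_eq_iff)

lemma adj_closed:
  assumes v: "v \<in> N" "v \<noteq> 0" and ab: "(a, b) \<in> adj_rel (E - {{v, p v}})"
  shows "a \<in> desc N p v \<longleftrightarrow> b \<in> desc N p v"
proof -
  have ab1: "{a, b} \<in> E" "{a, b} \<noteq> {v, p v}" using ab unfolding adj_rel_def by auto
  then obtain w where w0: "w \<in> N" "w \<noteq> 0" "{a, b} = {w, p w}" unfolding pedges_def by auto
  with ab1 have w: "w \<in> N" "w \<noteq> 0" "{a, b} = {w, p w}" "{w, p w} \<noteq> {v, p v}" by auto
  have wv: "w \<noteq> v" using w by auto
  have "w \<in> desc N p v \<longleftrightarrow> p w \<in> desc N p v"
  proof
    assume "w \<in> desc N p v"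
    thus "p w \<in> desc N p v" using wv by (cases rule: desc.cases) auto
  next
    assume "p w \<in> desc N p v" thus "w \<in> desc N p v" using w by (auto intro: desc_step)
  qed
  thus ?thesis using w(3) by (auto simp: doubleton_eq_iff)
qed

lemma rt_closed:
  assumes v: "v \<in> N" "v \<noteq> 0" and ab: "(a, b) \<in> (adj_rel (E - {{v, p v}}))\<^sup>*"
  shows "a \<in> desc N p v \<longleftrightarrow> b \<in> desc N p v"
  using ab by (induction rule: rtrancl_induct) (use adj_closed[OF v] in auto)

lemma pv_notin: "v \<in> N \<Longrightarrow> v \<noteq> 0 \<Longrightarrow> p v \<notin> desc N p v"
  using desc_ge par by fastforce

lemma to_root:
  assumes v: "v \<in> N" "v \<noteq> 0"
  shows "w \<in> N \<Longrightarrow> w \<notin> desc N p v \<Longrightarrow> (w, 0) \<in> (adj_rel (E - {{v, p v}}))\<^sup>*"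
proof (induction w rule: less_induct)
  case (less w)
  show ?case
  proof (cases "w = 0")
    case True thus ?thesis by simp
  next
    case False
    have pw: "p w \<in> N" "p w < w" using par[OF less.prems(1) False] by auto
    have pwn: "p w \<notin> desc N p v" using less.prems False by (auto intro: desc_step)
    have "{w, p w} \<noteq> {v, p v}"
      using edge_neq[OF v less.prems(1) False] less.prems(2) by (auto intro: desc_base)
    hence "(w, p w) \<in> adj_rel (E - {{v, p v}})"
      unfolding adj_rel_def pedges_def using less.prems(1) False by auto
    moreover have "(p w, 0) \<in> (adj_rel (E - {{v, p v}}))\<^sup>*" using less.IH[OF pw(2) pw(1) pwn] .
    ultimately show ?thesis by (rule converse_rtrancl_into_rtrancl)
  qed
qed

lemma to_root_full: "w \<in> N \<Longrightarrow> (w, 0) \<in> (adj_rel E)\<^sup>*"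
proof (induction w rule: less_induct)
  case (less w)
  show ?case
  proof (cases "w = 0")
    case True thus ?thesis by simp
  next
    case False
    have pw: "p w \<in> N" "p w < w" using par[OF less.prems(1) False] by auto
    have "(w, p w) \<in> adj_rel E"
      unfolding adj_rel_def pedges_def using less.prems(1) False by auto
    moreover have "(p w, 0) \<in> (adj_rel E)\<^sup>*" using less.IH[OF pw(2) pw(1)] .
    ultimately show ?thesis by (rule converse_rtrancl_into_rtrancl)
  qed
qed

lemma is_tree: "is_tree N E"
  unfolding is_tree_def
proof (intro conjI ballI allI impI)
  show "finite N" by (rule finN)
  show "N \<noteq> {}" using root by auto
next
  fix e assume "e \<in> E"
  then obtain w where "w \<in> N" "w \<noteq> 0" "e = {w, p w}" unfolding pedges_def by auto
  thus "\<exists>x y. e = {x, y} \<and> x \<noteq> y \<and> x \<in> N \<and> y \<in> N" using par[of w] by force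
next
  fix x y assume "x \<in> N" "y \<in> N"
  thus "(x, y) \<in> (adj_rel E)\<^sup>*" using to_root_full[of x] to_root_full[of y] rt_sym
    by (meson rtrancl_trans)
next
  fix e x y assume e: "e \<in> E" and exy: "e = {x, y}"
  then obtain v where v: "v \<in> N" "v \<noteq> 0" "e = {v, p v}" unfolding pedges_def by auto
  show "(x, y) \<notin> (adj_rel (E - {e}))\<^sup>*"
  proof
    assume "(x, y) \<in> (adj_rel (E - {e}))\<^sup>*"
    hence "x \<in> desc N p v \<longleftrightarrow> y \<in> desc N p v" using rt_closed[OF v(1,2)] v(3) by simp
    moreover have "{x, y} = {v, p v}" using exy v by simp
    ultimately show False using pv_notin[OF v(1,2)] desc_base[of v N p]
      by (auto simp: doubleton_eq_iff)
  qed
qed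

lemma degree_eq:
  assumes "v \<in> N"
  shows "Defs.degree E v = card {w \<in> N - {0}. w = v \<or> p w = v}"
proof -
  have inj: "inj_on (\<lambda>w. {w, p w}) (N - {0})"
  proof (rule inj_onI)
    fix w w' assume "w \<in> N - {0}" "w' \<in> N - {0}" "{w, p w} = {w', p w'}"
    thus "w = w'" using edge_neq[of w' w] by auto
  qed
  have "{e \<in> E. v \<in> e} = (\<lambda>w. {w, p w}) ` {w \<in> N - {0}. w = v \<or> p w = v}"
    unfolding pedges_def by auto
  hence "Defs.degree E v = card ((\<lambda>w. {w, p w}) ` {w \<in> N - {0}. w = v \<or> p w = v})"
    unfolding Defs.degree_def by simp
  also have "\<dots> = card {w \<in> N - {0}. w = v \<or> p w = v}"
    by (rule card_image) (rule inj_on_subset[OF inj], auto)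
  finally show ?thesis .
qed

lemma edge_side_cases:
  assumes v: "v \<in> N" "v \<noteq> 0"
  shows "edge_side N E L {v, p v} \<subseteq> L ` (leaves N E \<inter> desc N p v) \<or>
         L ` (leaves N E - desc N p v) \<subseteq> edge_side N E L {v, p v}"
proof -
  define u0 where "u0 = (SOME u. u \<in> {v, p v})"
  have "u0 \<in> {v, p v}" unfolding u0_def by (rule someI[of _ v]) simp
  hence "u0 = v \<or> u0 = p v" by auto
  thus ?thesis
  proof
    assume u: "u0 = v"
    have "edge_side N E L {v, p v} \<subseteq> L ` (leaves N E \<inter> desc N p v)"
      unfolding edge_side_def u0_def[symmetric] u
      using rt_closed[OF v] desc_base[of v N p] by blast
    thus ?thesis by blast
  next
    assume u: "u0 = p v"
    have "L ` (leaves N E - desc N p v) \<subseteq> edge_side N E L {v, p v}"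
    proof
      fix z assume "z \<in> L ` (leaves N E - desc N p v)"
      then obtain w where w: "w \<in> leaves N E" "w \<notin> desc N p v" "z = L w" by auto
      have wN: "w \<in> N" using w(1) unfolding leaves_def by auto
      have "(w, 0) \<in> (adj_rel (E - {{v, p v}}))\<^sup>*" using to_root[OF v wN w(2)] .
      hence "(0, w) \<in> (adj_rel (E - {{v, p v}}))\<^sup>*" by (rule rt_sym)
      moreover have "(p v, 0) \<in> (adj_rel (E - {{v, p v}}))\<^sup>*"
        using to_root[OF v _ pv_notin[OF v]] par[OF v] by auto
      ultimately have "(p v, w) \<in> (adj_rel (E - {{v, p v}}))\<^sup>*" by (meson rtrancl_trans)
      thus "z \<in> edge_side N E L {v, p v}"
        unfolding edge_side_def u0_def[symmetric] u using w by auto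
    qed
    thus ?thesis by blast
  qed
qed

end


definition lastb :: "nat \<Rightarrow> nat \<Rightarrow> nat \<Rightarrow> bool" where
  "lastb n q i \<longleftrightarrow> Suc i = q \<or> Suc i = 2 * q \<or> Suc i = n"
definition firstb :: "nat \<Rightarrow> nat \<Rightarrow> bool" where
  "firstb q i \<longleftrightarrow> i = 0 \<or> i = q \<or> i = 2 * q"
definition blk :: "nat \<Rightarrow> nat \<Rightarrow> nat" where
  "blk q i = (if i < q then 0 else if i < 2 * q then 1 else 2)"
definition cN :: "nat \<Rightarrow> nat \<Rightarrow> nat set" where
  "cN n q = insert 0 ({Suc i | i. i < n \<and> \<not> lastb n q i} \<union> {n + 1 + i | i. i < n})"
definition cp :: "nat \<Rightarrow> nat \<Rightarrow> nat \<Rightarrow> nat" where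
  "cp n q v = (if n + 1 \<le> v then
       (if \<not> lastb n q (v - (n + 1)) then Suc (v - (n + 1))
        else if firstb q (v - (n + 1)) then 0 else v - (n + 1))
     else if v = 0 then 0 else if firstb q (v - 1) then 0 else v - 1)"
definition bo :: "nat \<Rightarrow> nat \<Rightarrow> nat \<Rightarrow> nat" where
  "bo n q v = blk q (if n + 1 \<le> v then v - (n + 1) else v - 1)"

locale cfg =
  fixes n q :: nat
  assumes q1: "1 \<le> q" and q2: "2 * q \<le> n" and q3: "n \<le> 3 * q"
begin

lemma cp_int: "i < n \<Longrightarrow> cp n q (Suc i) = (if firstb q i then 0 else i)"
  unfolding cp_def by auto

lemma cp_leaf: "cp n q (n + 1 + i) = (if \<not> lastb n q i then Suc i else if firstb q i then 0 else i)"
  unfolding cp_def by auto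

lemma nonfirst_prev:
  assumes "i < n" "\<not> firstb q i"
  shows "i = Suc (i - 1)" "i - 1 < n" "\<not> lastb n q (i - 1)" "blk q (i - 1) = blk q i"
  using assms unfolding firstb_def lastb_def blk_def by auto

lemma nonlast_next:
  assumes "i < n" "\<not> lastb n q i"
  shows "Suc i < n" "\<not> firstb q (Suc i)" "blk q (Suc i) = blk q i"
  using assms unfolding firstb_def lastb_def blk_def by auto

lemma cN_cases:
  assumes "v \<in> cN n q"
  obtains "v = 0" | i where "i < n" "\<not> lastb n q i" "v = Suc i" | i where "i < n" "v = n + 1 + i"
  using assms unfolding cN_def by auto

lemma int_in: "i < n \<Longrightarrow> \<not> lastb n q i \<Longrightarrow> Suc i \<in> cN n q"
  unfolding cN_def by auto
lemma leaf_in: "i < n \<Longrightarrow> n + 1 + i \<in> cN n q"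
  unfolding cN_def by auto

lemma ptree: "ptree (cN n q) (cp n q)"
proof
  show "finite (cN n q)" unfolding cN_def by auto
  show "0 \<in> cN n q" unfolding cN_def by auto
next
  fix v assume v: "v \<in> cN n q" "v \<noteq> 0"
  from v(1) show "cp n q v \<in> cN n q \<and> cp n q v < v"
  proof (cases rule: cN_cases)
    case 1 thus ?thesis using v by simp
  next
    case (2 i)
    show ?thesis
    proof (cases "firstb q i")
      case True thus ?thesis using 2 cp_int[of i] by (simp add: cN_def)
    next
      case False
      note nf = nonfirst_prev[OF 2(1) False]
      have "i \<in> cN n q" using int_in[OF nf(2) nf(3)] nf(1) by simp
      thus ?thesis using 2 cp_int[of i] False by simp
    qed
  next
    case (3 i)
    show ?thesis
    proof (cases "lastb n q i")
      case False thus ?thesis using 3 cp_leaf[of i] int_in[OF 3(1) False] by simp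
    next
      case True
      show ?thesis
      proof (cases "firstb q i")
        case True thus ?thesis using 3 cp_leaf[of i] \<open>lastb n q i\<close> by (simp add: cN_def)
      next
        case False
        note nf = nonfirst_prev[OF 3(1) False]
        have "i \<in> cN n q" using int_in[OF nf(2) nf(3)] nf(1) by simp
        thus ?thesis using 3 cp_leaf[of i] False True by simp
      qed
    qed
  qed
qed

sublocale T: ptree "cN n q" "cp n q" by (rule ptree)

lemma cp_le: assumes "w \<in> cN n q" shows "cp n q w \<le> n"
  using assms
proof (cases rule: cN_cases)
  case 1 thus ?thesis by (simp add: cp_def)
next
  case (2 i) thus ?thesis using cp_int[of i] by auto
next
  case (3 i) thus ?thesis using cp_leaf[of i] by auto
qed

definition C where "C v = {w \<in> cN n q - {0}. w = v \<or> cp n q w = v}"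

lemma C_leaf: "i < n \<Longrightarrow> C (n + 1 + i) = {n + 1 + i}"
  unfolding C_def using cp_le leaf_in by fastforce

lemma C_int_sub:
  assumes i: "i < n" "\<not> lastb n q i"
  shows "C (Suc i) \<subseteq> {Suc i, n + 1 + i, if lastb n q (Suc i) then n + 2 + i else Suc (Suc i)}"
proof
  fix w assume "w \<in> C (Suc i)"
  hence w: "w \<in> cN n q" "w \<noteq> 0" "w = Suc i \<or> cp n q w = Suc i" unfolding C_def by auto
  from w(1) show "w \<in> {Suc i, n + 1 + i, if lastb n q (Suc i) then n + 2 + i else Suc (Suc i)}"
  proof (cases rule: cN_cases)
    case 1 thus ?thesis using w by simp
  next
    case (2 j) thus ?thesis using w cp_int[of j] by (auto split: if_splits)
  next
    case (3 j) thus ?thesis using w cp_leaf[of j] by (auto split: if_splits)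
  qed
qed

lemma C_int_sup:
  assumes i: "i < n" "\<not> lastb n q i"
  shows "{Suc i, n + 1 + i} \<subseteq> C (Suc i)"
  unfolding C_def using i int_in leaf_in cp_leaf[of i] by auto

definition cc where "cc i = (if lastb n q i then n + 1 + i else Suc i)"

lemma C_root_sub: "C 0 \<subseteq> cc ` {0, q, 2 * q}"
proof
  fix w assume "w \<in> C 0"
  hence w: "w \<in> cN n q" "w \<noteq> 0" "cp n q w = 0" unfolding C_def by auto
  from w(1) show "w \<in> cc ` {0, q, 2 * q}"
  proof (cases rule: cN_cases)
    case 1 thus ?thesis using w by simp
  next
    case (2 j)
    have "firstb q j" using w 2 cp_int[of j] nonfirst_prev[OF 2(1)] by (auto split: if_splits)
    hence "j \<in> {0, q, 2 * q}" unfolding firstb_def by auto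
    moreover have "w = cc j" using 2 unfolding cc_def by simp
    ultimately show ?thesis by blast
  next
    case (3 j)
    have "lastb n q j" using w 3 cp_leaf[of j] by (auto split: if_splits)
    hence "firstb q j" using w 3 cp_leaf[of j] nonfirst_prev[OF 3(1)] by (auto split: if_splits)
    hence "j \<in> {0, q, 2 * q}" unfolding firstb_def by auto
    moreover have "w = cc j" using 3 \<open>lastb n q j\<close> unfolding cc_def by simp
    ultimately show ?thesis by blast
  qed
qed

lemma cc_in: "i < n \<Longrightarrow> firstb q i \<Longrightarrow> cc i \<in> C 0"
  unfolding C_def cc_def using int_in leaf_in cp_int cp_leaf by auto

lemma C_root_sup: "{cc 0, cc q} \<subseteq> C 0"
  using cc_in[of 0] cc_in[of q] q1 q2 unfolding firstb_def by auto

lemma cc_0q: "cc 0 \<noteq> cc q"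
  unfolding cc_def using q1 q2 by auto

lemma degree_C: "v \<in> cN n q \<Longrightarrow> Defs.degree (pedges (cN n q) (cp n q)) v = card (C v)"
  unfolding C_def by (rule T.degree_eq)

lemma finC: "finite (C v)" unfolding C_def using T.finN by auto

lemma degrees:
  assumes v: "v \<in> cN n q"
  shows "Defs.degree (pedges (cN n q) (cp n q)) v \<le> 3"
    "Defs.degree (pedges (cN n q) (cp n q)) v = 1 \<longleftrightarrow> (\<exists>i<n. v = n + 1 + i)"
proof -
  have "card (C v) \<le> 3 \<and> (card (C v) = 1 \<longleftrightarrow> (\<exists>i<n. v = n + 1 + i))"
    using v
  proof (cases rule: cN_cases)
    case 1
    have "card (C 0) \<le> card (cc ` {0, q, 2 * q})" by (rule card_mono[OF _ C_root_sub]) auto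
    also have "\<dots> \<le> card {0, q, 2 * q}" by (rule card_image_le) auto
    also have "\<dots> \<le> 3" by (auto simp: card_insert_if)
    finally have a: "card (C 0) \<le> 3" .
    have "card {cc 0, cc q} \<le> card (C 0)" by (rule card_mono[OF finC C_root_sup])
    hence "card (C 0) \<ge> 2" using cc_0q by simp
    thus ?thesis using a 1 by auto
  next
    case (2 i)
    have "card (C (Suc i)) \<le> card {Suc i, n + 1 + i, if lastb n q (Suc i) then n + 2 + i else Suc (Suc i)}"
      by (rule card_mono[OF _ C_int_sub[OF 2(1,2)]]) auto
    also have "\<dots> \<le> 3" by (auto simp: card_insert_if)
    finally have a: "card (C (Suc i)) \<le> 3" .
    have "card {Suc i, n + 1 + i} \<le> card (C (Suc i))" by (rule card_mono[OF finC C_int_sup[OF 2(1,2)]])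
    hence "card (C (Suc i)) \<ge> 2" using q1 q2 by simp
    thus ?thesis using a 2 by auto
  next
    case (3 i)
    thus ?thesis using C_leaf[of i] by auto
  qed
  thus "Defs.degree (pedges (cN n q) (cp n q)) v \<le> 3"
    "Defs.degree (pedges (cN n q) (cp n q)) v = 1 \<longleftrightarrow> (\<exists>i<n. v = n + 1 + i)"
    using degree_C[OF v] by auto
qed

lemma leaves_eq: "leaves (cN n q) (pedges (cN n q) (cp n q)) = (\<lambda>i. n + 1 + i) ` {..<n}"
  unfolding leaves_def using degrees leaf_in by auto

lemma subcubic: "subcubic_tree (cN n q) (pedges (cN n q) (cp n q))"
  unfolding subcubic_tree_def using T.is_tree degrees(1) by auto

lemma bo_par:
  assumes w: "w \<in> cN n q" "w \<noteq> 0" "cp n q w \<noteq> 0"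
  shows "bo n q (cp n q w) = bo n q w"
  using w(1)
proof (cases rule: cN_cases)
  case 1 thus ?thesis using w by simp
next
  case (2 i)
  hence nf: "\<not> firstb q i" using w cp_int[of i] by auto
  note a = nonfirst_prev[OF 2(1) nf]
  have "cp n q w = i" using 2 cp_int[of i] nf by simp
  thus ?thesis using 2 a unfolding bo_def by auto
next
  case (3 i)
  show ?thesis
  proof (cases "lastb n q i")
    case False
    hence "cp n q w = Suc i" using 3 cp_leaf[of i] by simp
    thus ?thesis using 3 unfolding bo_def by auto
  next
    case True
    hence nf: "\<not> firstb q i" using w 3 cp_leaf[of i] by auto
    note a = nonfirst_prev[OF 3(1) nf]
    have "cp n q w = i" using 3 cp_leaf[of i] nf True by simp
    thus ?thesis using 3 a unfolding bo_def by auto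
  qed
qed

lemma desc_bo:
  assumes v: "v \<in> cN n q" "v \<noteq> 0"
  shows "w \<in> desc (cN n q) (cp n q) v \<Longrightarrow> bo n q w = bo n q v"
proof (induction rule: desc.induct)
  case desc_base thus ?case by simp
next
  case (desc_step w)
  have "cp n q w \<noteq> 0" using T.desc_ge[OF desc_step.hyps(3)] v by auto
  thus ?case using bo_par[OF desc_step.hyps(1,2)] desc_step.IH by simp
qed

lemma blk_card: "card {i. i < n \<and> blk q i = b} \<le> q"
proof -
  have "{i. i < n \<and> blk q i = b} \<subseteq> {b * q..<b * q + q}"
    using q3 by (auto simp: blk_def split: if_splits)
  hence "card {i. i < n \<and> blk q i = b} \<le> card {b * q..<b * q + q}" by (intro card_mono) auto
  thus ?thesis by simp
qed

lemma leaves_desc_card: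
  assumes v: "v \<in> cN n q" "v \<noteq> 0"
  shows "card (leaves (cN n q) (pedges (cN n q) (cp n q)) \<inter> desc (cN n q) (cp n q) v) \<le> q"
proof -
  have "leaves (cN n q) (pedges (cN n q) (cp n q)) \<inter> desc (cN n q) (cp n q) v
        \<subseteq> (\<lambda>i. n + 1 + i) ` {i. i < n \<and> blk q i = bo n q v}"
  proof
    fix w assume w: "w \<in> leaves (cN n q) (pedges (cN n q) (cp n q)) \<inter> desc (cN n q) (cp n q) v"
    then obtain i where i: "i < n" "w = n + 1 + i" unfolding leaves_eq by auto
    have "bo n q w = bo n q v" using desc_bo[OF v] w by auto
    hence "blk q i = bo n q v" using i unfolding bo_def by simp
    thus "w \<in> (\<lambda>i. n + 1 + i) ` {i. i < n \<and> blk q i = bo n q v}" using i by auto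
  qed
  hence "card (leaves (cN n q) (pedges (cN n q) (cp n q)) \<inter> desc (cN n q) (cp n q) v)
      \<le> card ((\<lambda>i. n + 1 + i) ` {i. i < n \<and> blk q i = bo n q v})" by (intro card_mono) auto
  also have "\<dots> \<le> card {i. i < n \<and> blk q i = bo n q v}" by (rule card_image_le) auto
  also have "\<dots> \<le> q" by (rule blk_card)
  finally show ?thesis .
qed

end


lemma edge_side_sub:
  assumes "bij_betw L (leaves N E) V"
  shows "edge_side N E L e \<subseteq> V"
  using assms unfolding edge_side_def bij_betw_def by auto

lemma bd_nonneg:
  assumes ps: "pure_state V \<psi>" and ne: "V \<noteq> {}" and bd: "branch_decomp V N E L"
  shows "0 \<le> bd_width V \<psi> N E L"
proof -
  have tr: "is_tree N E" and bij: "bij_betw L (leaves N E) V"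
    using bd unfolding branch_decomp_def subcubic_tree_def by blast+
  from tr have finN: "finite N" and t3: "\<forall>e\<in>E. \<exists>x y. e = {x, y} \<and> x \<noteq> y \<and> x \<in> N \<and> y \<in> N"
    unfolding is_tree_def by blast+
  have "E \<subseteq> Pow N"
  proof
    fix e assume "e \<in> E"
    then obtain x y where "e = {x, y}" "x \<in> N" "y \<in> N" using t3 by blast
    thus "e \<in> Pow N" by auto
  qed
  moreover have "finite (Pow N)" using finN by simp
  ultimately have finE: "finite E" by (rule finite_subset)
  have "leaves N E \<noteq> {}" using bij ne unfolding bij_betw_def by auto
  then obtain v where "v \<in> leaves N E" by auto
  hence "card {e \<in> E. v \<in> e} = 1" unfolding leaves_def Defs.degree_def by auto
  hence "{e \<in> E. v \<in> e} \<noteq> {}" by (metis card.empty zero_neq_one)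
  then obtain e where e: "e \<in> E" by auto
  have "0 \<le> ent_entropy V (edge_side N E L e) \<psi>"
    by (rule ent_entropy_bounds(1)[OF ps edge_side_sub[OF bij]])
  also have "\<dots> \<le> bd_width V \<psi> N E L"
    unfolding bd_width_def using finE e by (intro Max_ge) auto
  finally show ?thesis .
qed

theorem mainTheorem6:
  fixes V :: "'a set" and \<psi> :: "'a set \<Rightarrow> complex" and n :: nat
  assumes "finite V" and "card V = n" and "n \<ge> 2" and "pure_state V \<psi>"
  shows "ent_width V \<psi> \<le> real_of_int \<lceil>real n / 3\<rceil>"
proof -
  note finV = assms(1) and cV = assms(2) and n2 = assms(3) and ps = assms(4)
  define q where "q = (n + 2) div 3"
  have qq: "1 \<le> q" "2 * q \<le> n" "n \<le> 3 * q" "3 * q \<le> n + 2" using n2 unfolding q_def by auto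
  interpret cfg n q using qq by unfold_locales auto
  have ceil: "real_of_int \<lceil>real n / 3\<rceil> = real q"
  proof -
    have "\<lceil>real n / 3\<rceil> = int q"
    proof (rule ceiling_unique)
      have "real (3 * q) \<le> real (n + 2)" using qq(4) by linarith
      thus "real_of_int (int q) - 1 < real n / 3" by simp
      have "real n \<le> real (3 * q)" using qq(3) by linarith
      thus "real n / 3 \<le> real_of_int (int q)" by simp
    qed
    thus ?thesis by simp
  qed
  obtain h where h: "bij_betw h {0..<card V} V" using ex_bij_betw_nat_finite[OF finV] by blast
  define N where "N = cN n q"
  define E where "E = pedges N (cp n q)"
  define L where "L w = h (w - (n + 1))" for w
  have lv: "leaves N E = (\<lambda>i. n + 1 + i) ` {..<n}" unfolding N_def E_def by (rule leaves_eq)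
  have bij: "bij_betw L (leaves N E) V"
    unfolding bij_betw_def
  proof
    have "L ` (leaves N E) = h ` {0..<n}" unfolding lv image_image L_def by auto
    thus "L ` leaves N E = V" using h cV unfolding bij_betw_def by simp
    show "inj_on L (leaves N E)"
    proof (rule inj_onI)
      fix a b assume a: "a \<in> leaves N E" and b: "b \<in> leaves N E" and ab: "L a = L b"
      from a b obtain i j where "i < n" "j < n" "a = n + 1 + i" "b = n + 1 + j" unfolding lv by auto
      thus "a = b" using ab h cV unfolding L_def bij_betw_def inj_on_def by auto
    qed
  qed
  have bd: "branch_decomp V N E L"
    unfolding branch_decomp_def using subcubic bij unfolding N_def E_def by auto
  have edge_bound: "ent_entropy V (edge_side N E L e) \<psi> \<le> real q" if e: "e \<in> E" for e
  proof -
    obtain v where v: "v \<in> N" "v \<noteq> 0" "e = {v, cp n q v}" using e unfolding E_def pedges_def by auto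
    define side where "side = edge_side N E L e"
    have sV: "side \<subseteq> V" unfolding side_def by (rule edge_side_sub[OF bij])
    define D where "D = leaves N E \<inter> desc N (cp n q) v"
    have finD: "finite D" unfolding D_def lv by auto
    have cD: "card D \<le> q" unfolding D_def N_def E_def
      using leaves_desc_card v unfolding N_def by auto
    have cLD: "card (L ` D) \<le> q" using card_image_le[OF finD, of L] cD by linarith
    have cases: "side \<subseteq> L ` D \<or> L ` (leaves N E - desc N (cp n q) v) \<subseteq> side"
      unfolding side_def D_def v(3) E_def N_def using T.edge_side_cases[of v L] v unfolding N_def by auto
    thus ?thesis
    proof
      assume "side \<subseteq> L ` D"
      hence "card side \<le> card (L ` D)" using finD by (intro card_mono) auto
      moreover have "ent_entropy V side \<psi> \<le> real (card side)"
        by (rule ent_entropy_bounds(2)[OF ps sV])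
      ultimately show ?thesis unfolding side_def using cLD by linarith
    next
      assume sub: "L ` (leaves N E - desc N (cp n q) v) \<subseteq> side"
      have "V - side \<subseteq> L ` D"
      proof
        fix x assume x: "x \<in> V - side"
        then obtain w where w: "w \<in> leaves N E" "x = L w" using bij unfolding bij_betw_def by auto
        have "w \<in> desc N (cp n q) v" using sub x w by auto
        thus "x \<in> L ` D" unfolding D_def using w by auto
      qed
      hence "card (V - side) \<le> card (L ` D)" using finD by (intro card_mono) auto
      moreover have "ent_entropy V side \<psi> \<le> real (card (V - side))"
        by (rule ent_entropy_bounds(3)[OF ps sV])
      ultimately show ?thesis unfolding side_def using cLD by linarith
    qed
  qed
  have finE: "finite E" unfolding E_def pedges_def N_def using T.finN by auto
  have neE: "E \<noteq> {}"
  proof -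
    have "n + 1 \<in> N" unfolding N_def using leaf_in[of 0] n2 by simp
    thus ?thesis unfolding E_def pedges_def by auto
  qed
  have bw: "bd_width V \<psi> N E L \<le> real q"
    unfolding bd_width_def using finE neE edge_bound by (subst Max_le_iff) auto
  have Vne: "V \<noteq> {}" using cV n2 by auto
  have "ent_width V \<psi> \<le> bd_width V \<psi> N E L"
    unfolding ent_width_def
  proof (rule cInf_lower)
    show "bd_width V \<psi> N E L \<in> {bd_width V \<psi> N E L |N E L. branch_decomp V N E L}" using bd by blast
    show "bdd_below {bd_width V \<psi> N E L |N E L. branch_decomp V N E L}"
      unfolding bdd_below_def using bd_nonneg[OF ps Vne] by blast
  qed
  thus ?thesis using bw ceil by linarith
qed


end
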